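(* Let $N\ge1$, let $K$ be a nonempty compact subset of $\mathbb{R}_+^N=[0,\infty)^N$, let $X$ be a compact Hausdorff space, and let $T_n$ ($n\in\mathbb{N}$) and $A$ be weakly nonlinear and monotone operators from $C(K)$ into $C(X)$ such that $A(1)(x)>0$ for all $x\in X$ and $$A(1)\,A\Big(\sum_{k=1}^N\mathrm{pr}_k^2\Big)=\sum_{k=1}^N\big(A(-\mathrm{pr}_k)\big)^2 .$$ If $T_n(g)\to A(g)$ uniformly on $X$ for each of the functions $g=1,\,-\mathrm{pr}_1,\dots,-\mathrm{pr}_N,\,\sum_{k=1}^N\mathrm{pr}_k^2$, then $T_n(f)\to A(f)$ uniformly on $X$ for every $f\in C(K)$.
   Context: For a compact space $Y$, $C(Y)$ denotes the Banach lattice of continuous real-valued functions on $Y$ with the pointwise order and the sup norm; products and squares of functions are pointwise, and $1$ denotes the constant function one. $\mathrm{pr}_k:K\to\mathbb{R}$ is the $k$-th coordinate projection. An operator $T:C(K)\to C(X)$ is weakly nonlinear if $T(f+g)\le T(f)+T(g)$ and $T(\alpha f)=\alpha T(f)$ for all $f,g$ and $\alpha\ge0$, and $T(f+\alpha\cdot1)=T(f)+\alpha T(1)$ for all $f$ and $\alpha\ge0$. $T$ is monotone if $f\le g$ implies $T(f)\le T(g)$. *)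

theory Defs
  imports "HOL-Analysis.Analysis"
begin

text \<open>An operator C(K) -> C(X) is modelled as a map on functions; all conditions are
  imposed only for inputs in C(K) and evaluated only on points of K resp. of the
  space X (given as an abstract topology).\<close>

definition CK :: "(real^'n) set \<Rightarrow> ((real^'n) \<Rightarrow> real) set" where
  "CK K = {f. continuous_on K f}"

definition maps_CK_CX :: "(real^'n) set \<Rightarrow> 'x topology \<Rightarrow> (((real^'n) \<Rightarrow> real) \<Rightarrow> 'x \<Rightarrow> real) \<Rightarrow> bool" where
  "maps_CK_CX K Xt T \<longleftrightarrow> (\<forall>f\<in>CK K. continuous_map Xt euclideanreal (T f))"

definition weakly_nonlinear :: "(real^'n) set \<Rightarrow> 'x topology \<Rightarrow> (((real^'n) \<Rightarrow> real) \<Rightarrow> 'x \<Rightarrow> real) \<Rightarrow> bool" where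
  "weakly_nonlinear K Xt T \<longleftrightarrow>
     (\<forall>f\<in>CK K. \<forall>g\<in>CK K. \<forall>x\<in>topspace Xt. T (\<lambda>y. f y + g y) x \<le> T f x + T g x) \<and>
     (\<forall>f\<in>CK K. \<forall>a::real. a \<ge> 0 \<longrightarrow> (\<forall>x\<in>topspace Xt. T (\<lambda>y. a * f y) x = a * T f x)) \<and>
     (\<forall>f\<in>CK K. \<forall>a::real. a \<ge> 0 \<longrightarrow> (\<forall>x\<in>topspace Xt. T (\<lambda>y. f y + a) x = T f x + a * T (\<lambda>y. 1) x))"

definition monotone_op :: "(real^'n) set \<Rightarrow> 'x topology \<Rightarrow> (((real^'n) \<Rightarrow> real) \<Rightarrow> 'x \<Rightarrow> real) \<Rightarrow> bool" where
  "monotone_op K Xt T \<longleftrightarrow>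
     (\<forall>f\<in>CK K. \<forall>g\<in>CK K. (\<forall>y\<in>K. f y \<le> g y) \<longrightarrow> (\<forall>x\<in>topspace Xt. T f x \<le> T g x))"

end

theory Submission
  imports Defs
begin
lemma wn_sub:
  assumes "weakly_nonlinear K Xt T" "f \<in> CK K" "g \<in> CK K" "x \<in> topspace Xt"
  shows "T (\<lambda>y. f y + g y) x \<le> T f x + T g x"
  using assms unfolding weakly_nonlinear_def by blast

lemma wn_hom:
  assumes "weakly_nonlinear K Xt T" "f \<in> CK K" "a \<ge> 0" "x \<in> topspace Xt"
  shows "T (\<lambda>y. a * f y) x = a * T f x"
  using assms unfolding weakly_nonlinear_def by blast

lemma wn_add:
  assumes "weakly_nonlinear K Xt T" "f \<in> CK K" "a \<ge> 0" "x \<in> topspace Xt"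
  shows "T (\<lambda>y. f y + a) x = T f x + a * T (\<lambda>y. 1) x"
  using assms unfolding weakly_nonlinear_def by blast

lemma mono_op:
  assumes "monotone_op K Xt T" "f \<in> CK K" "g \<in> CK K" "\<And>y. y \<in> K \<Longrightarrow> f y \<le> g y" "x \<in> topspace Xt"
  shows "T f x \<le> T g x"
  using assms unfolding monotone_op_def by blast

lemma wn_zero:
  assumes "weakly_nonlinear K Xt T" "x \<in> topspace Xt"
  shows "T (\<lambda>y. 0) x = 0"
proof -
  have c: "(\<lambda>y. 0::real) \<in> CK K" by (simp add: CK_def)
  have "T (\<lambda>y. 0 * (\<lambda>y. 0) y) x = 0 * T (\<lambda>y. 0) x"
    by (rule wn_hom[OF assms(1) c _ assms(2)]) simp
  then show ?thesis by simp
qed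

lemma wn_const_add:
  assumes "weakly_nonlinear K Xt T" "x \<in> topspace Xt" "f \<in> CK K"
  shows "T (\<lambda>y. f y + a) x = T f x + a * T (\<lambda>y. 1) x"
proof (cases "a \<ge> 0")
  case True show ?thesis by (rule wn_add[OF assms(1,3) True assms(2)])
next
  case False
  have g: "(\<lambda>y. f y + a) \<in> CK K" using assms(3) by (auto simp: CK_def intro!: continuous_intros)
  have "T (\<lambda>y. (f y + a) + (-a)) x = T (\<lambda>y. f y + a) x + (-a) * T (\<lambda>y. 1) x"
    using wn_add[OF assms(1) g _ assms(2), of "-a"] False by simp
  then show ?thesis by simp
qed

lemma wn_const:
  assumes "weakly_nonlinear K Xt T" "x \<in> topspace Xt"
  shows "T (\<lambda>y. a) x = a * T (\<lambda>y. 1) x"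
  using wn_const_add[OF assms, of "\<lambda>y. 0" a] wn_zero[OF assms] by (simp add: CK_def)

lemma wn_sum:
  assumes "weakly_nonlinear K Xt T" "x \<in> topspace Xt" "finite S" "\<forall>k\<in>S. g k \<in> CK K"
  shows "T (\<lambda>y. \<Sum>k\<in>S. g k y) x \<le> (\<Sum>k\<in>S. T (g k) x)"
  using assms(3,4)
proof (induction S rule: finite_induct)
  case empty then show ?case using wn_zero[OF assms(1,2)] by simp
next
  case (insert k S)
  have s: "(\<lambda>y. \<Sum>k\<in>S. g k y) \<in> CK K"
    using insert.prems by (auto simp: CK_def intro!: continuous_on_sum)
  have gk: "g k \<in> CK K" using insert.prems by simp
  have "T (\<lambda>y. \<Sum>k\<in>insert k S. g k y) x = T (\<lambda>y. g k y + (\<Sum>k\<in>S. g k y)) x"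
    using insert.hyps by simp
  also have "\<dots> \<le> T (g k) x + T (\<lambda>y. \<Sum>k\<in>S. g k y) x"
    by (rule wn_sub[OF assms(1) gk s assms(2)])
  also have "\<dots> \<le> T (g k) x + (\<Sum>k\<in>S. T (g k) x)" using insert by simp
  finally show ?case using insert.hyps by simp
qed

lemma wn_Q:
  fixes T :: "((real^'n) \<Rightarrow> real) \<Rightarrow> 'x \<Rightarrow> real"
  assumes wn: "weakly_nonlinear K Xt T" and x: "x \<in> topspace Xt" and z: "\<forall>k. 0 \<le> z$k"
  shows "T (\<lambda>y. \<Sum>k\<in>UNIV. (y$k - z$k)^2) x \<le> T (\<lambda>y. \<Sum>k\<in>UNIV. (y$k)^2) x
     + (\<Sum>k\<in>UNIV. 2*z$k * T (\<lambda>y. -(y$k)) x) + (\<Sum>k\<in>UNIV. (z$k)^2) * T (\<lambda>y. 1) x"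
proof -
  define h1 where "h1 = (\<lambda>y::real^'n. \<Sum>k\<in>UNIV. (y$k)^2)"
  define h2 where "h2 = (\<lambda>y::real^'n. \<Sum>k\<in>UNIV. 2*z$k * (-(y$k)))"
  have h1c: "h1 \<in> CK K" unfolding h1_def CK_def by (auto intro!: continuous_intros)
  have h2c: "h2 \<in> CK K" unfolding h2_def CK_def by (auto intro!: continuous_intros)
  have h12c: "(\<lambda>y. h1 y + h2 y) \<in> CK K" using h1c h2c by (auto simp: CK_def intro!: continuous_intros)
  have eq: "(\<lambda>y. \<Sum>k\<in>UNIV. (y$k - z$k)^2) = (\<lambda>y. (h1 y + h2 y) + (\<Sum>k\<in>UNIV. (z$k)^2))"
    unfolding h1_def h2_def
    by (rule ext) (simp add: sum.distrib[symmetric] power2_diff algebra_simps)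
  have "T (\<lambda>y. \<Sum>k\<in>UNIV. (y$k - z$k)^2) x = T (\<lambda>y. h1 y + h2 y) x + (\<Sum>k\<in>UNIV. (z$k)^2) * T (\<lambda>y. 1) x"
    unfolding eq using wn_const_add[OF wn x h12c] by simp
  also have "T (\<lambda>y. h1 y + h2 y) x \<le> T h1 x + T h2 x"
    by (rule wn_sub[OF wn h1c h2c x])
  also have "T h2 x \<le> (\<Sum>k\<in>UNIV. T (\<lambda>y. 2*z$k * (-(y$k))) x)"
    unfolding h2_def by (rule wn_sum[OF wn x]) (auto simp: CK_def intro!: continuous_intros)
  also have "\<dots> = (\<Sum>k\<in>UNIV. 2*z$k * T (\<lambda>y. -(y$k)) x)"
  proof (rule sum.cong[OF refl])
    fix k
    have "(\<lambda>y::real^'n. -(y$k)) \<in> CK K" by (auto simp: CK_def intro!: continuous_intros)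
    moreover have "2*z$k \<ge> 0" using z by simp
    ultimately show "T (\<lambda>y. 2*z$k * (-(y$k))) x = 2*z$k * T (\<lambda>y. -(y$k)) x"
      using wn_hom[OF wn _ _ x] by blast
  qed
  finally show ?thesis unfolding h1_def by simp
qed

lemma est:
  fixes T :: "((real^'n) \<Rightarrow> real) \<Rightarrow> 'x \<Rightarrow> real"
  assumes wn: "weakly_nonlinear K Xt T" and mo: "monotone_op K Xt T"
    and f: "f \<in> CK K" and C: "C \<ge> 0" and x: "x \<in> topspace Xt" and z: "\<forall>k. 0 \<le> z$k"
    and hest: "\<forall>y\<in>K. \<bar>f y - f z\<bar> \<le> \<epsilon> + C * (\<Sum>k\<in>UNIV. (y$k - z$k)^2)"
  shows "T f x \<le> (f z + \<epsilon>) * T (\<lambda>y. 1) x + C * (T (\<lambda>y. \<Sum>k\<in>UNIV. (y$k)^2) x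
     + (\<Sum>k\<in>UNIV. 2*z$k * T (\<lambda>y. -(y$k)) x) + (\<Sum>k\<in>UNIV. (z$k)^2) * T (\<lambda>y. 1) x)"
    and "(f z - \<epsilon>) * T (\<lambda>y. 1) x - C * (T (\<lambda>y. \<Sum>k\<in>UNIV. (y$k)^2) x
     + (\<Sum>k\<in>UNIV. 2*z$k * T (\<lambda>y. -(y$k)) x) + (\<Sum>k\<in>UNIV. (z$k)^2) * T (\<lambda>y. 1) x) \<le> T f x"
proof -
  define Q where "Q = (\<lambda>y::real^'n. \<Sum>k\<in>UNIV. (y$k - z$k)^2)"
  define R where "R = T (\<lambda>y. \<Sum>k\<in>UNIV. (y$k)^2) x
     + (\<Sum>k\<in>UNIV. 2*z$k * T (\<lambda>y. -(y$k)) x) + (\<Sum>k\<in>UNIV. (z$k)^2) * T (\<lambda>y. 1) x"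
  have Qc: "Q \<in> CK K" unfolding Q_def CK_def by (auto intro!: continuous_intros)
  have CQc: "(\<lambda>y. C * Q y) \<in> CK K" using Qc unfolding CK_def by (auto intro!: continuous_intros)
  have QR: "T Q x \<le> R" unfolding Q_def R_def by (rule wn_Q[OF wn x z])
  have CQ: "T (\<lambda>y. C * Q y) x = C * T Q x" by (rule wn_hom[OF wn Qc C x])
  have CQR: "C * T Q x \<le> C * R" using QR C by (simp add: mult_left_mono)
  have up1: "(\<lambda>y. C * Q y + (f z + \<epsilon>)) \<in> CK K" using CQc unfolding CK_def by (auto intro!: continuous_intros)
  have "T f x \<le> T (\<lambda>y. C * Q y + (f z + \<epsilon>)) x"
    by (rule mono_op[OF mo f up1 _ x]) (use hest in \<open>auto simp: Q_def\<close>)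
  also have "\<dots> = T (\<lambda>y. C * Q y) x + (f z + \<epsilon>) * T (\<lambda>y. 1) x"
    by (rule wn_const_add[OF wn x CQc])
  finally show "T f x \<le> (f z + \<epsilon>) * T (\<lambda>y. 1) x + C * R" using CQ CQR by linarith
  have lo1: "(\<lambda>y. f y + C * Q y) \<in> CK K" using CQc f unfolding CK_def by (auto intro!: continuous_intros)
  have "(f z - \<epsilon>) * T (\<lambda>y. 1) x = T (\<lambda>y. f z - \<epsilon>) x" by (rule wn_const[OF wn x, symmetric])
  also have "\<dots> \<le> T (\<lambda>y. f y + C * Q y) x"
    by (rule mono_op[OF mo _ lo1 _ x]) (use hest in \<open>auto simp: Q_def CK_def\<close>)
  also have "\<dots> \<le> T f x + T (\<lambda>y. C * Q y) x" by (rule wn_sub[OF wn f CQc x])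
  finally show "(f z - \<epsilon>) * T (\<lambda>y. 1) x - C * R \<le> T f x" using CQ CQR by linarith
qed

lemma norm_sq_cart: "norm (x::real^'n)^2 = (\<Sum>k\<in>UNIV. (x$k)^2)"
  by (simp add: norm_vec_def L2_set_def sum_nonneg)

lemma cont_est:
  fixes f :: "real^'n \<Rightarrow> real"
  assumes K: "compact K" and f: "continuous_on K f" and e: "\<epsilon> > 0"
  shows "\<exists>C\<ge>0. \<forall>y\<in>K. \<forall>z\<in>K. \<bar>f y - f z\<bar> \<le> \<epsilon> + C * (\<Sum>k\<in>UNIV. (y$k - z$k)^2)"
proof -
  have "uniformly_continuous_on K f" using compact_uniformly_continuous[OF f K] .
  then obtain d where d: "d > 0" and hd: "\<forall>y\<in>K. \<forall>z\<in>K. dist z y < d \<longrightarrow> dist (f z) (f y) < \<epsilon>"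
    using e unfolding uniformly_continuous_on_def by metis
  have "bounded (f ` K)" using compact_continuous_image[OF f K] compact_imp_bounded by blast
  then obtain M where M: "\<forall>y\<in>K. \<bar>f y\<bar> \<le> M" unfolding bounded_real by blast
  define M' where "M' = max M 0"
  define C where "C = 2 * M' / d^2"
  have C0: "C \<ge> 0" unfolding C_def M'_def by simp
  have "\<forall>y\<in>K. \<forall>z\<in>K. \<bar>f y - f z\<bar> \<le> \<epsilon> + C * (\<Sum>k\<in>UNIV. (y$k - z$k)^2)"
  proof (intro ballI)
    fix y z assume y: "y \<in> K" and z: "z \<in> K"
    have Qeq: "(\<Sum>k\<in>UNIV. (y$k - z$k)^2) = (dist y z)^2"
      by (simp add: dist_norm norm_sq_cart)
    have Qn: "0 \<le> C * (dist y z)^2" using C0 by simp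
    show "\<bar>f y - f z\<bar> \<le> \<epsilon> + C * (\<Sum>k\<in>UNIV. (y$k - z$k)^2)"
    proof (cases "dist y z < d")
      case True
      then have "dist (f y) (f z) < \<epsilon>" using hd y z by blast
      then show ?thesis using Qn Qeq by (simp add: dist_real_def)
    next
      case False
      then have "d^2 \<le> (dist y z)^2" using d by (simp add: power_mono)
      then have "C * d^2 \<le> C * (dist y z)^2" using C0 by (simp add: mult_left_mono)
      moreover have "C * d^2 = 2 * M'" unfolding C_def using d by simp
      moreover have "\<bar>f y - f z\<bar> \<le> 2 * M'" proof -
        have "\<bar>f y\<bar> \<le> M" "\<bar>f z\<bar> \<le> M" using M y z by auto
        then show ?thesis unfolding M'_def by linarith
      qed
      ultimately show ?thesis unfolding Qeq using e by linarith
    qed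
  qed
  then show ?thesis using C0 by blast
qed

theorem mainTheorem3:
  fixes K :: "(real^'n) set" and Xt :: "'x topology"
    and T :: "nat \<Rightarrow> ((real^'n) \<Rightarrow> real) \<Rightarrow> 'x \<Rightarrow> real"
    and A :: "((real^'n) \<Rightarrow> real) \<Rightarrow> 'x \<Rightarrow> real"
  assumes K_compact: "compact K" and K_ne: "K \<noteq> {}"
    and K_pos: "\<forall>y\<in>K. \<forall>k. 0 \<le> y $ k"
    and X_compact: "compact_space Xt" and X_Haus: "Hausdorff_space Xt"
    and T_maps: "\<And>n. maps_CK_CX K Xt (T n)"
    and T_wn: "\<And>n. weakly_nonlinear K Xt (T n)"
    and T_mono: "\<And>n. monotone_op K Xt (T n)"
    and A_maps: "maps_CK_CX K Xt A"
    and A_wn: "weakly_nonlinear K Xt A"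
    and A_mono: "monotone_op K Xt A"
    and A1_pos: "\<forall>x\<in>topspace Xt. A (\<lambda>y. 1) x > 0"
    and A_eq: "\<forall>x\<in>topspace Xt.
        A (\<lambda>y. 1) x * A (\<lambda>y. \<Sum>k\<in>UNIV. (y $ k)\<^sup>2) x = (\<Sum>k\<in>UNIV. (A (\<lambda>y. - (y $ k)) x)\<^sup>2)"
    and conv_1: "uniform_limit (topspace Xt) (\<lambda>n. T n (\<lambda>y. 1)) (A (\<lambda>y. 1)) sequentially"
    and conv_pr: "\<And>k. uniform_limit (topspace Xt) (\<lambda>n. T n (\<lambda>y. - (y $ k))) (A (\<lambda>y. - (y $ k))) sequentially"
    and conv_sq: "uniform_limit (topspace Xt) (\<lambda>n. T n (\<lambda>y. \<Sum>k\<in>UNIV. (y $ k)\<^sup>2))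
                    (A (\<lambda>y. \<Sum>k\<in>UNIV. (y $ k)\<^sup>2)) sequentially"
  shows "\<forall>f\<in>CK K. uniform_limit (topspace Xt) (\<lambda>n. T n f) (A f) sequentially"
proof
  fix f assume f: "f \<in> CK K"
  define one where "one = (\<lambda>y::real^'n. 1::real)"
  define S2 where "S2 = (\<lambda>y::real^'n. \<Sum>k\<in>UNIV. (y$k)^2)"
  define pr where "pr = (\<lambda>k (y::real^'n). - (y$k))"
  define RT where "RT = (\<lambda>(U::((real^'n) \<Rightarrow> real) \<Rightarrow> 'x \<Rightarrow> real) (z::real^'n) x.
     U (\<lambda>y. \<Sum>k\<in>UNIV. (y$k)^2) x + (\<Sum>k\<in>UNIV. 2*z$k * U (\<lambda>y. -(y$k)) x)
     + (\<Sum>k\<in>UNIV. (z$k)^2) * U (\<lambda>y. 1) x)"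
  define c where "c = (\<lambda>x. \<chi> k. - A (\<lambda>y. -(y$k)) x / A (\<lambda>y. 1) x)"
  have b_nonpos: "A (\<lambda>y. -(y$k)) x \<le> 0" if x: "x \<in> topspace Xt" for k x
  proof -
    have "A (\<lambda>y. -(y$k)) x \<le> A (\<lambda>y. 0) x"
      by (rule mono_op[OF A_mono _ _ _ x]) (use K_pos in \<open>auto simp: CK_def intro!: continuous_intros\<close>)
    then show ?thesis using wn_zero[OF A_wn x] by simp
  qed
  have c_nonneg: "\<forall>k. 0 \<le> c x $ k" if x: "x \<in> topspace Xt" for x
    using b_nonpos[OF x] A1_pos x unfolding c_def
    by (auto intro!: divide_nonpos_pos)
  have RA0: "RT A (c x) x = 0" if x: "x \<in> topspace Xt" for x
  proof -
    define a where "a = A (\<lambda>y. 1) x"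
    define b where "b = (\<lambda>k. A (\<lambda>y. -(y$k)) x)"
    have a: "a > 0" using A1_pos x unfolding a_def by blast
    have e1: "(\<Sum>k\<in>UNIV. 2 * c x $ k * A (\<lambda>y. -(y$k)) x) = - 2 * (\<Sum>k\<in>UNIV. (b k)^2) / a"
      unfolding c_def b_def a_def by (simp add: sum_distrib_left sum_divide_distrib power2_eq_square mult.assoc)
    have e2: "(\<Sum>k\<in>UNIV. (c x $ k)^2) = (\<Sum>k\<in>UNIV. (b k)^2) / a^2"
      unfolding c_def b_def a_def by (simp add: sum_divide_distrib power_divide)
    have e3: "a * A (\<lambda>y. \<Sum>k\<in>UNIV. (y $ k)\<^sup>2) x = (\<Sum>k\<in>UNIV. (b k)^2)"
      using A_eq x unfolding a_def b_def by blast
    have "RT A (c x) x = A (\<lambda>y. \<Sum>k\<in>UNIV. (y $ k)\<^sup>2) x - 2 * (\<Sum>k\<in>UNIV. (b k)^2) / a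
          + (\<Sum>k\<in>UNIV. (b k)^2) / a^2 * a"
      unfolding RT_def e1 e2 by (simp add: a_def)
    also have "\<dots> = 0" using a e3 by (simp add: field_simps power2_eq_square)
    finally show ?thesis .
  qed
  have cK: "c x \<in> K" if x: "x \<in> topspace Xt" for x
  proof (rule ccontr)
    assume nK: "c x \<notin> K"
    define d where "d = infdist (c x) K"
    have d: "d > 0" unfolding d_def
      by (rule infdist_pos_not_in_closed[OF compact_imp_closed[OF K_compact] K_ne nK])
    have Qc: "(\<lambda>y::real^'n. \<Sum>k\<in>UNIV. (y$k - c x$k)^2) \<in> CK K"
      unfolding CK_def by (auto intro!: continuous_intros)
    have "A (\<lambda>y. d^2) x \<le> A (\<lambda>y. \<Sum>k\<in>UNIV. (y$k - c x$k)^2) x"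
    proof (rule mono_op[OF A_mono _ Qc _ x])
      show "(\<lambda>y. d^2) \<in> CK K" by (simp add: CK_def)
      fix y assume y: "y \<in> K"
      have "d \<le> dist (c x) y" unfolding d_def using infdist_le[OF y] .
      then have "d^2 \<le> (dist y (c x))^2" using d by (simp add: power_mono dist_commute)
      then show "d^2 \<le> (\<Sum>k\<in>UNIV. (y$k - c x$k)^2)" by (simp add: dist_norm norm_sq_cart)
    qed
    also have "\<dots> \<le> RT A (c x) x" unfolding RT_def by (rule wn_Q[OF A_wn x c_nonneg[OF x]])
    also have "\<dots> = 0" by (rule RA0[OF x])
    finally have "d^2 * A (\<lambda>y. 1) x \<le> 0" using wn_const[OF A_wn x, of "d^2"] by simp
    moreover have "d^2 * A (\<lambda>y. 1) x > 0" using d A1_pos x by simp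
    ultimately show False by linarith
  qed
  have oneC: "(\<lambda>y::real^'n. 1::real) \<in> CK K" by (simp add: CK_def)
  obtain B where B: "\<forall>x\<in>topspace Xt. \<bar>A (\<lambda>y. 1) x\<bar> \<le> B"
    using A_maps oneC X_compact unfolding maps_CK_CX_def
    by (metis compact_space_def image_compactin compactin_euclidean_iff compact_imp_bounded bounded_real imageI)
  have fc: "continuous_on K f" using f by (simp add: CK_def)
  have "bounded (f ` K)" using compact_continuous_image[OF fc K_compact] compact_imp_bounded by blast
  then obtain M where M: "\<forall>y\<in>K. \<bar>f y\<bar> \<le> M" unfolding bounded_real by blast
  obtain P where P: "\<forall>z\<in>K. norm z \<le> P"
    using compact_imp_bounded[OF K_compact] unfolding bounded_iff by blast
  have cP: "\<bar>c x $ k\<bar> \<le> \<bar>P\<bar>" if x: "x \<in> topspace Xt" for x k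
    using component_le_norm_cart[of "c x" k] P cK[OF x] by fastforce
  show "uniform_limit (topspace Xt) (\<lambda>n. T n f) (A f) sequentially"
  proof (rule uniform_limitI)
    fix e :: real assume e: "e > 0"
    define \<epsilon> where "\<epsilon> = e / (4 * (\<bar>B\<bar> + 1))"
    have \<epsilon>: "\<epsilon> > 0" unfolding \<epsilon>_def using e by (simp add: add_pos_nonneg)
    obtain C where C: "C \<ge> 0" and hC: "\<forall>y\<in>K. \<forall>z\<in>K. \<bar>f y - f z\<bar> \<le> \<epsilon> + C * (\<Sum>k\<in>UNIV. (y$k - z$k)^2)"
      using cont_est[OF K_compact fc \<epsilon>] by blast
    define \<eta> where "\<eta> = min 1 (e / (2 * (\<bar>M\<bar> + C + 1)))"
    have \<eta>: "\<eta> > 0" "\<eta> \<le> 1" using e C unfolding \<eta>_def by (auto simp: add_pos_nonneg)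
    have \<eta>2: "\<eta> * (\<bar>M\<bar> + C) < e / 2"
    proof -
      have "\<eta> * (\<bar>M\<bar> + C) \<le> e / (2 * (\<bar>M\<bar> + C + 1)) * (\<bar>M\<bar> + C)"
        unfolding \<eta>_def using C by (intro mult_right_mono) auto
      also have "\<dots> < e / 2" using e C by (simp add: field_simps)
      finally show ?thesis .
    qed
    define D where "D = 1 + 2 * real CARD('n) * \<bar>P\<bar> + real CARD('n) * P^2"
    have D: "D \<ge> 1" unfolding D_def by simp
    define \<eta>1 where "\<eta>1 = \<eta> / (2 * D)"
    have \<eta>1: "\<eta>1 > 0" "\<eta>1 * D = \<eta> / 2" "\<eta>1 \<le> \<eta>" using \<eta> D unfolding \<eta>1_def by (auto simp: field_simps)
    have ev: "\<forall>\<^sub>F n in sequentially. (\<forall>x\<in>topspace Xt. dist (T n (\<lambda>y. 1) x) (A (\<lambda>y. 1) x) < \<eta>1) \<and>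
       (\<forall>x\<in>topspace Xt. dist (T n (\<lambda>y. \<Sum>k\<in>UNIV. (y$k)^2) x) (A (\<lambda>y. \<Sum>k\<in>UNIV. (y$k)^2) x) < \<eta>1) \<and>
       (\<forall>k. \<forall>x\<in>topspace Xt. dist (T n (\<lambda>y. -(y$k)) x) (A (\<lambda>y. -(y$k)) x) < \<eta>1)"
      by (intro eventually_conj uniform_limitD[OF conv_1 \<eta>1(1)] uniform_limitD[OF conv_sq \<eta>1(1)]
        eventually_all_finite uniform_limitD[OF conv_pr \<eta>1(1)])
    show "\<forall>\<^sub>F n in sequentially. \<forall>x\<in>topspace Xt. dist (T n f x) (A f x) < e"
      using ev
    proof eventually_elim
      case (elim n)
      show ?case
      proof
        fix x assume x: "x \<in> topspace Xt"
        define z where "z = c x"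
        have zK: "z \<in> K" and z0: "\<forall>k. 0 \<le> z$k" using cK[OF x] c_nonneg[OF x] unfolding z_def by auto
        have hest: "\<forall>y\<in>K. \<bar>f y - f z\<bar> \<le> \<epsilon> + C * (\<Sum>k\<in>UNIV. (y$k - z$k)^2)" using hC zK by blast
        note eT = est[OF T_wn T_mono f C x z0 hest]
        note eA = est[OF A_wn A_mono f C x z0 hest]
        have RA: "RT A z x = 0" using RA0[OF x] unfolding z_def .
        have d1: "\<bar>T n (\<lambda>y. 1) x - A (\<lambda>y. 1) x\<bar> < \<eta>1" using elim x by (simp add: dist_real_def)
        have dS: "\<bar>T n (\<lambda>y. \<Sum>k\<in>UNIV. (y$k)^2) x - A (\<lambda>y. \<Sum>k\<in>UNIV. (y$k)^2) x\<bar> < \<eta>1"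
          using elim x by (simp add: dist_real_def)
        have dk: "\<bar>T n (\<lambda>y. -(y$k)) x - A (\<lambda>y. -(y$k)) x\<bar> < \<eta>1" for k
          using elim x by (simp add: dist_real_def)
        have zP: "\<bar>z$k\<bar> \<le> \<bar>P\<bar>" for k using cP[OF x] unfolding z_def .
        have t2: "\<bar>(\<Sum>k\<in>UNIV. 2*z$k * T n (\<lambda>y. -(y$k)) x) - (\<Sum>k\<in>UNIV. 2*z$k * A (\<lambda>y. -(y$k)) x)\<bar>
                  \<le> 2 * real CARD('n) * \<bar>P\<bar> * \<eta>1"
        proof -
          have "\<bar>(\<Sum>k\<in>UNIV. 2*z$k * T n (\<lambda>y. -(y$k)) x) - (\<Sum>k\<in>UNIV. 2*z$k * A (\<lambda>y. -(y$k)) x)\<bar>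
              = \<bar>\<Sum>k\<in>UNIV. 2*z$k * (T n (\<lambda>y. -(y$k)) x - A (\<lambda>y. -(y$k)) x)\<bar>"
            by (simp add: sum_subtractf[symmetric] algebra_simps)
          also have "\<dots> \<le> (\<Sum>k\<in>UNIV. \<bar>2*z$k * (T n (\<lambda>y. -(y$k)) x - A (\<lambda>y. -(y$k)) x)\<bar>)"
            by (rule sum_abs)
          also have "\<dots> \<le> (\<Sum>k\<in>(UNIV::'n set). 2 * \<bar>P\<bar> * \<eta>1)"
          proof (rule sum_mono)
            fix k
            have "\<bar>2*z$k * (T n (\<lambda>y. -(y$k)) x - A (\<lambda>y. -(y$k)) x)\<bar>
               = 2 * \<bar>z$k\<bar> * \<bar>T n (\<lambda>y. -(y$k)) x - A (\<lambda>y. -(y$k)) x\<bar>" by (simp add: abs_mult)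
            also have "\<dots> \<le> 2 * \<bar>P\<bar> * \<eta>1"
              using zP[of k] dk[of k] by (intro mult_mono) auto
            finally show "\<bar>2*z$k * (T n (\<lambda>y. -(y$k)) x - A (\<lambda>y. -(y$k)) x)\<bar> \<le> 2 * \<bar>P\<bar> * \<eta>1" .
          qed
          also have "\<dots> = 2 * real CARD('n) * \<bar>P\<bar> * \<eta>1" by simp
          finally show ?thesis .
        qed
        have t3: "\<bar>(\<Sum>k\<in>UNIV. (z$k)^2) * T n (\<lambda>y. 1) x - (\<Sum>k\<in>UNIV. (z$k)^2) * A (\<lambda>y. 1) x\<bar>
                  \<le> real CARD('n) * P^2 * \<eta>1"
        proof -
          have s: "(\<Sum>k\<in>UNIV. (z$k)^2) \<le> real CARD('n) * P^2"
          proof -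
            have "(\<Sum>k\<in>UNIV. (z$k)^2) \<le> (\<Sum>k\<in>(UNIV::'n set). P^2)"
              by (rule sum_mono) (use zP abs_le_square_iff in blast)
            then show ?thesis by simp
          qed
          have s0: "0 \<le> (\<Sum>k\<in>UNIV. (z$k)^2)" by (simp add: sum_nonneg)
          have "\<bar>(\<Sum>k\<in>UNIV. (z$k)^2) * T n (\<lambda>y. 1) x - (\<Sum>k\<in>UNIV. (z$k)^2) * A (\<lambda>y. 1) x\<bar>
             = (\<Sum>k\<in>UNIV. (z$k)^2) * \<bar>T n (\<lambda>y. 1) x - A (\<lambda>y. 1) x\<bar>"
            using s0 by (simp add: abs_mult right_diff_distrib[symmetric])
          also have "\<dots> \<le> real CARD('n) * P^2 * \<eta>1"
            using s s0 d1 by (intro mult_mono) auto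
          finally show ?thesis .
        qed
        have Rn: "\<bar>RT (T n) z x\<bar> \<le> \<eta> / 2"
        proof -
          have "\<bar>RT (T n) z x\<bar> = \<bar>RT (T n) z x - RT A z x\<bar>" using RA by simp
          also have "\<dots> \<le> \<eta>1 + 2 * real CARD('n) * \<bar>P\<bar> * \<eta>1 + real CARD('n) * P^2 * \<eta>1"
            using dS t2 t3 unfolding RT_def by linarith
          also have "\<dots> = \<eta>1 * D" unfolding D_def by (simp add: algebra_simps)
          finally show ?thesis using \<eta>1 by simp
        qed
        define a where "a = A (\<lambda>y. 1) x"
        define t where "t = T n (\<lambda>y. 1) x - a"
        have t: "\<bar>t\<bar> < \<eta>" using d1 \<eta>1 unfolding t_def a_def by linarith
        have aB: "\<bar>a\<bar> \<le> \<bar>B\<bar>" using B x unfolding a_def by fastforce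
        have fz: "\<bar>f z\<bar> \<le> \<bar>M\<bar>" using M zK by fastforce
        have Tup: "T n f x \<le> (f z + \<epsilon>) * (a + t) + C * RT (T n) z x"
          using eT(1) unfolding RT_def t_def a_def by simp
        have Tlo: "(f z - \<epsilon>) * (a + t) - C * RT (T n) z x \<le> T n f x"
          using eT(2) unfolding RT_def t_def a_def by simp
        have Aup: "A f x \<le> (f z + \<epsilon>) * a" using eA(1) RA unfolding RT_def a_def by simp
        have Alo: "(f z - \<epsilon>) * a \<le> A f x" using eA(2) RA unfolding RT_def a_def by simp
        have b1: "\<bar>f z * t\<bar> \<le> \<bar>M\<bar> * \<eta>" using fz t by (simp add: abs_mult mult_mono)
        have b2: "\<bar>\<epsilon> * (2 * a + t)\<bar> \<le> \<epsilon> * (2 * \<bar>B\<bar> + 1)"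
        proof -
          have "\<bar>2 * a + t\<bar> \<le> 2 * \<bar>B\<bar> + 1" using aB t \<eta> by linarith
          then show ?thesis using \<epsilon> by (simp add: abs_mult mult_left_mono)
        qed
        have b3: "\<bar>C * RT (T n) z x\<bar> \<le> C * \<eta>"
          using Rn C \<eta> by (simp add: abs_mult mult_left_mono)
        have b4: "\<epsilon> * (2 * \<bar>B\<bar> + 1) < e / 2"
          unfolding \<epsilon>_def using e by (simp add: field_simps)
        have up: "T n f x - A f x \<le> f z * t + \<epsilon> * (2 * a + t) + C * RT (T n) z x"
          using Tup Alo by (simp add: algebra_simps)
        have lo: "T n f x - A f x \<ge> f z * t - \<epsilon> * (2 * a + t) - C * RT (T n) z x"
          using Tlo Aup by (simp add: algebra_simps)
        have "\<bar>T n f x - A f x\<bar> \<le> \<bar>M\<bar> * \<eta> + \<epsilon> * (2 * \<bar>B\<bar> + 1) + C * \<eta>"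
          using up lo b1 b2 b3 by (simp add: abs_le_iff)
        also have "\<dots> < e" using b4 \<eta>2 by (simp add: algebra_simps)
        finally show "dist (T n f x) (A f x) < e" by (simp add: dist_real_def)
      qed
    qed
  qed
qed

end
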